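(* In the $m$-type setting described in the context, suppose $x_i=x$ for all types $i$. Then diffusion occurs from a small seed if and only if $x>1$.
   Context: There are $m\ge1$ types. $\Pi=(\pi_{ij})$ is a nonnegative row-stochastic primitive $m\times m$ matrix ($\pi_{ij}$ is the probability that a meeting of a type-$i$ agent is with a type-$j$ agent). For each type $i$: $P_i$ is a degree distribution on the nonnegative integers; $w_i(d)>0$ are degree weights; $f_i(d,a)$, $g_i(d,a)$ ($0\le a\le d$) are adoption and abandonment rates satisfying: $f_i(d,0)=0$; $f_i(d,a)$ nondecreasing in $a$; $f_i(d,1)>0$ for some $d$ with $P_i(d)>0$; $g_i(d,0)>0$; $g_i(d,a)$ nonincreasing in $a$. Let $x_i=\sum_dP_i(d)w_i(d)\,d\,\frac{f_i(d,1)}{g_i(d,0)}$, assumed finite; it is positive. $A$ is the $m\times m$ matrix with $A_{ij}=\pi_{ij}x_j$. Diffusion occurs from a small seed means: for every $\varepsilon>0$ there exists $v\in\mathbb{R}^m$ with $0<v_i<\varepsilon$ and $(Av)_i>v_i$ for all $i$. *)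

theory Defs
  imports "HOL-Analysis.Analysis"
begin

text \<open>Types are indexed by a finite type 'i (so m = CARD('i) >= 1).
  Matrices are real^'i^'i, with (M $ i $ j) the (i,j) entry.\<close>

fun mat_pow :: "real^'i::finite^'i \<Rightarrow> nat \<Rightarrow> real^'i^'i" where
  "mat_pow M 0 = mat 1"
| "mat_pow M (Suc k) = M ** mat_pow M k"

definition nonneg_matrix :: "real^'i::finite^'i \<Rightarrow> bool" where
  "nonneg_matrix M \<longleftrightarrow> (\<forall>i j. 0 \<le> M $ i $ j)"

definition row_stochastic :: "real^'i::finite^'i \<Rightarrow> bool" where
  "row_stochastic M \<longleftrightarrow> nonneg_matrix M \<and> (\<forall>i. (\<Sum>j\<in>UNIV. M $ i $ j) = 1)"

definition primitive :: "real^'i::finite^'i \<Rightarrow> bool" where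
  "primitive M \<longleftrightarrow> nonneg_matrix M \<and> (\<exists>k. \<forall>i j. 0 < mat_pow M k $ i $ j)"

definition degree_distribution :: "(nat \<Rightarrow> real) \<Rightarrow> bool" where
  "degree_distribution p \<longleftrightarrow> (\<forall>d. 0 \<le> p d) \<and> p sums 1"

definition xval :: "('i \<Rightarrow> nat \<Rightarrow> real) \<Rightarrow> ('i \<Rightarrow> nat \<Rightarrow> real) \<Rightarrow>
    ('i \<Rightarrow> nat \<Rightarrow> nat \<Rightarrow> real) \<Rightarrow> ('i \<Rightarrow> nat \<Rightarrow> nat \<Rightarrow> real) \<Rightarrow> 'i \<Rightarrow> real" where
  "xval P w f g i = (\<Sum>d. P i d * w i d * real d * f i d 1 / g i d 0)"

definition Amat :: "real^'i::finite^'i \<Rightarrow> ('i \<Rightarrow> real) \<Rightarrow> real^'i^'i" where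
  "Amat M x = (\<chi> i j. M $ i $ j * x j)"

definition diffusion_small_seed :: "real^'i::finite^'i \<Rightarrow> bool" where
  "diffusion_small_seed A \<longleftrightarrow>
     (\<forall>\<epsilon>>0. \<exists>v::real^'i. (\<forall>i. 0 < v $ i \<and> v $ i < \<epsilon>) \<and> (\<forall>i. (A *v v) $ i > v $ i))"

end

theory Submission
  imports Defs
begin

theorem corollary4:
  fixes PiM :: "real^'i::finite^'i"
    and P w :: "'i \<Rightarrow> nat \<Rightarrow> real"
    and f g :: "'i \<Rightarrow> nat \<Rightarrow> nat \<Rightarrow> real"
    and x :: real
  assumes Pi_stoch: "row_stochastic PiM"
    and Pi_prim: "primitive PiM"
    and P_dist: "\<And>i. degree_distribution (P i)"
    and w_pos: "\<And>i d. 0 < w i d"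
    and f_nonneg: "\<And>i d a. a \<le> d \<Longrightarrow> 0 \<le> f i d a"
    and g_nonneg: "\<And>i d a. a \<le> d \<Longrightarrow> 0 \<le> g i d a"
    and f_zero: "\<And>i d. f i d 0 = 0"
    and f_mono: "\<And>i d a b. a \<le> b \<Longrightarrow> b \<le> d \<Longrightarrow> f i d a \<le> f i d b"
    and f_pos: "\<And>i. \<exists>d\<ge>1. 0 < P i d \<and> 0 < f i d 1"
    and g_pos: "\<And>i d. 0 < g i d 0"
    and g_mono: "\<And>i d a b. a \<le> b \<Longrightarrow> b \<le> d \<Longrightarrow> g i d b \<le> g i d a"
    and x_finite: "\<And>i. summable (\<lambda>d. P i d * w i d * real d * f i d 1 / g i d 0)"
    and x_const: "\<And>i. xval P w f g i = x"
  shows "diffusion_small_seed (Amat PiM (xval P w f g)) \<longleftrightarrow> x > 1"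
proof -
  have nn: "\<And>i j. 0 \<le> PiM $ i $ j" and rs: "\<And>i. (\<Sum>j\<in>UNIV. PiM $ i $ j) = 1"
    using Pi_stoch unfolding row_stochastic_def nonneg_matrix_def by auto
  have Av: "\<And>v i. (Amat PiM (xval P w f g) *v v) $ i = x * (\<Sum>j\<in>UNIV. PiM $ i $ j * v $ j)"
    by (simp add: Amat_def matrix_vector_mult_def x_const sum_distrib_left algebra_simps)
  show ?thesis
  proof
    assume d: "diffusion_small_seed (Amat PiM (xval P w f g))"
    then obtain v :: "real^'i" where vpos: "\<And>i. 0 < v $ i"
      and gt: "\<And>i. (Amat PiM (xval P w f g) *v v) $ i > v $ i"
      unfolding diffusion_small_seed_def by (meson zero_less_one)
    define M where "M = Max (range (\<lambda>j. v $ j))"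
    have "M \<in> range (\<lambda>j. v $ j)" unfolding M_def by (intro Max_in) auto
    then obtain i where iM: "v $ i = M" by auto
    have le: "\<And>j. v $ j \<le> v $ i" unfolding iM M_def by (rule Max_ge) auto
    define s where "s = (\<Sum>j\<in>UNIV. PiM $ i $ j * v $ j)"
    have "s \<le> (\<Sum>j\<in>UNIV. PiM $ i $ j * v $ i)"
      unfolding s_def by (intro sum_mono mult_left_mono le nn)
    also have "\<dots> = v $ i" using rs[of i] by (simp add: sum_distrib_right[symmetric])
    finally have s1: "s \<le> v $ i" .
    have s0: "0 \<le> s" unfolding s_def
      by (intro sum_nonneg mult_nonneg_nonneg nn) (simp add: less_imp_le vpos)
    have xs: "x * s > v $ i" using gt[of i] Av s_def by simp
    have "s > 0" using xs vpos[of i] s0 by (cases "s = 0") auto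
    with xs s1 have "x * s > 1 * s" by linarith
    with \<open>s > 0\<close> show "x > 1" using mult_less_cancel_right_pos by blast
  next
    assume x1: "x > 1"
    show "diffusion_small_seed (Amat PiM (xval P w f g))"
      unfolding diffusion_small_seed_def
    proof (intro allI impI)
      fix e :: real assume e: "e > 0"
      let ?v = "(\<chi> j. e / 2) :: real^'i"
      have "\<And>i. (Amat PiM (xval P w f g) *v ?v) $ i = x * (e/2)"
      proof -
        fix i
        have "(\<Sum>j\<in>UNIV. PiM $ i $ j * (e/2)) = (\<Sum>j\<in>UNIV. PiM $ i $ j) * (e/2)"
          by (rule sum_distrib_right[symmetric])
        then show "(Amat PiM (xval P w f g) *v ?v) $ i = x * (e/2)" using rs[of i] by (simp add: Av)
      qed
      moreover have "x * (e/2) > e/2" using x1 e by simp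
      ultimately show "\<exists>v::real^'i. (\<forall>i. 0 < v $ i \<and> v $ i < e) \<and> (\<forall>i. (Amat PiM (xval P w f g) *v v) $ i > v $ i)"
        using e by (intro exI[of _ ?v]) auto
    qed
  qed
qed

end
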